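(* Let $q\ge2$ be an integer, $d$ a positive integer and $F$ a finite field of characteristic $p$. Then the Char-$q$-$s$ network has a $d$-dimensional VLNC solution over $F$ with $s$-coefficient matrix $A_1\ne 0$ on $e_1$ if and only if $p$ divides $q$.
   Context: Vector linear network coding: each source $v$ generates $x_v\in F^d$; an edge out of a source $v$ carries $Ax_v$ for a $d\times d$ matrix $A$ over $F$; an edge out of an intermediate node carries $\sum A_{e',e}y_{e'}$ over the edges $e'$ entering that node; a terminal computes vectors $\sum B_ey_e$ over its incoming edges; a $d$-dimensional VLNC solution over $F$ is such a code with which every terminal computes each demanded message for all message choices. The Char-$q$-$s$ network (integer $q\ge2$): sources $s,x_1,\dots,x_{q+2}$; intermediate nodes $m_1,\dots,m_{q+3},n_1,\dots,n_{q+3}$; terminals $r_1,\dots,r_{q+3}$; edges: $(x_1,m_i)$ for $1\le i\le q+1$; $(s,m_1)$ and $(s,m_i)$ for $4\le i\le q+3$; $(x_i,m_j)$ for $2\le i,j\le q+2$, $i\ne j$; $(x_i,m_{q+3})$ for $1\le i\le q+2$; $e_i=(m_i,n_i)$ for $1\le i\le q+3$; $(n_i,r_i)$ for $1\le i\le q+2$; $(n_{q+3},r_i)$ and $(n_i,r_{q+3})$ for $1\le i\le q+2$; $(x_i,r_1)$ for $2\le i\le q+1$; $(x_1,r_{q+2})$; $(s,r_2)$; $(s,r_3)$. Demands: $r_1$ demands $x_{q+2}$; $r_i$ demands $x_i$ for $2\le i\le q+2$; $r_{q+3}$ demands $x_1$; no terminal demands $s$. In any $d$-dimensional VLNC over $F$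 the vector on $e_1$ has the form $y_{e_1}=M_1x_1+A_1s$ with $d\times d$ matrices $M_1,A_1$; $A_1$ is called the $s$-coefficient matrix on $e_1$. *)

theory Defs
  imports "HOL-Analysis.Analysis"
begin

text \<open>Messages are vectors in F^d, represented as
'a^'d with a finite index type 'd (so d = CARD('d) >= 1).  d x d matrices are 'a^'d^'d.\<close>

definition in_edges :: "('v \<times> 'v) set \<Rightarrow> 'v \<Rightarrow> ('v \<times> 'v) set" where
  "in_edges E u = {e \<in> E. snd e = u}"

text \<open>A d-dimensional vector linear network code: local coefficient matrices.
  srcC e : the matrix A on an edge e out of a source (carries A x_v);
  intC e' e : the matrix A_{e',e} for e' entering the tail of e (e out of an intermediate node);
  decC t v e : decoding matrix B_e used by terminal t to compute the message of source v.\<close>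

record ('a, 'd, 'v) vlnc =
  srcC :: "'v \<times> 'v \<Rightarrow> 'a^'d^'d"
  intC :: "'v \<times> 'v \<Rightarrow> 'v \<times> 'v \<Rightarrow> 'a^'d^'d"
  decC :: "'v \<Rightarrow> 'v \<Rightarrow> 'v \<times> 'v \<Rightarrow> 'a^'d^'d"

definition edge_vectors ::
  "('v \<times> 'v) set \<Rightarrow> 'v set \<Rightarrow> ('a::field, 'd::finite, 'v) vlnc
     \<Rightarrow> ('v \<Rightarrow> 'a^'d) \<Rightarrow> ('v \<times> 'v \<Rightarrow> 'a^'d) \<Rightarrow> bool" where
  "edge_vectors E Src C x y \<longleftrightarrow>
     (\<forall>e\<in>E. fst e \<in> Src \<longrightarrow> y e = srcC C e *v x (fst e)) \<and>
     (\<forall>e\<in>E. fst e \<notin> Src \<longrightarrow> y e = (\<Sum>e'\<in>in_edges E (fst e). intC C e' e *v y e'))"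

definition is_vlnc_solution ::
  "('v \<times> 'v) set \<Rightarrow> 'v set \<Rightarrow> 'v set \<Rightarrow> ('v \<Rightarrow> 'v set)
     \<Rightarrow> ('a::field, 'd::finite, 'v) vlnc \<Rightarrow> bool" where
  "is_vlnc_solution E Src Trm Dem C \<longleftrightarrow>
     (\<forall>x y. edge_vectors E Src C x y \<longrightarrow>
        (\<forall>t\<in>Trm. \<forall>v\<in>Dem t. (\<Sum>e\<in>in_edges E t. decC C t v e *v y e) = x v))"

datatype node = S | X nat | M nat | N nat | R nat

definition charq_edges :: "nat \<Rightarrow> (node \<times> node) set" where
  "charq_edges q =
     {(X 1, M i) | i. 1 \<le> i \<and> i \<le> q + 1}
   \<union> {(S, M 1)} \<union> {(S, M i) | i. 4 \<le> i \<and> i \<le> q + 3}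
   \<union> {(X i, M j) | i j. 2 \<le> i \<and> i \<le> q + 2 \<and> 2 \<le> j \<and> j \<le> q + 2 \<and> i \<noteq> j}
   \<union> {(X i, M (q + 3)) | i. 1 \<le> i \<and> i \<le> q + 2}
   \<union> {(M i, N i) | i. 1 \<le> i \<and> i \<le> q + 3}
   \<union> {(N i, R i) | i. 1 \<le> i \<and> i \<le> q + 2}
   \<union> {(N (q + 3), R i) | i. 1 \<le> i \<and> i \<le> q + 2}
   \<union> {(N i, R (q + 3)) | i. 1 \<le> i \<and> i \<le> q + 2}
   \<union> {(X i, R 1) | i. 2 \<le> i \<and> i \<le> q + 1}
   \<union> {(X 1, R (q + 2))} \<union> {(S, R 2)} \<union> {(S, R 3)}"

definition charq_sources :: "nat \<Rightarrow> node set" where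
  "charq_sources q = {S} \<union> {X i | i. 1 \<le> i \<and> i \<le> q + 2}"

definition charq_terminals :: "nat \<Rightarrow> node set" where
  "charq_terminals q = {R i | i. 1 \<le> i \<and> i \<le> q + 3}"

definition charq_demands :: "nat \<Rightarrow> node \<Rightarrow> node set" where
  "charq_demands q t =
     (if t = R 1 then {X (q + 2)}
      else if t = R (q + 3) then {X 1}
      else if (\<exists>i. 2 \<le> i \<and> i \<le> q + 2 \<and> t = R i) then {X (case t of R i \<Rightarrow> i | _ \<Rightarrow> 0)}
      else {})"

definition e1 :: "node \<times> node" where "e1 = (M 1, N 1)"

definition s_coeff_on_e1 :: "nat \<Rightarrow> ('a::field, 'd::finite, node) vlnc \<Rightarrow> 'a^'d^'d \<Rightarrow> bool" where
  "s_coeff_on_e1 q C A1 \<longleftrightarrow>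
     (\<exists>M1. \<forall>x y. edge_vectors (charq_edges q) (charq_sources q) C x y \<longrightarrow>
              y e1 = M1 *v x (X 1) + A1 *v x S)"

end

theory Submission imports Defs begin

definition preds :: "('v \<times> 'v) set \<Rightarrow> 'v \<Rightarrow> 'v set" where
  "preds E u = {v. (v,u) \<in> E}"

lemma sum_in_edges: "(\<Sum>e\<in>in_edges E u. f e) = (\<Sum>v\<in>preds E u. f (v,u))"
proof -
  have "in_edges E u = (\<lambda>v. (v,u)) ` preds E u"
    by (force simp: in_edges_def preds_def image_iff)
  moreover have "inj_on (\<lambda>v. (v,u)) (preds E u)" by (auto simp: inj_on_def)
  ultimately show ?thesis by (simp add: sum.reindex o_def)
qed

lemma inE_M: "(v, M i) \<in> charq_edges q \<longleftrightarrow>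
   (v = X 1 \<and> 1 \<le> i \<and> i \<le> q+1) \<or> (v = S \<and> (i = 1 \<or> 4 \<le> i \<and> i \<le> q+3))
 \<or> (\<exists>j. v = X j \<and> 2 \<le> j \<and> j \<le> q+2 \<and> 2 \<le> i \<and> i \<le> q+2 \<and> j \<noteq> i)
 \<or> (\<exists>j. v = X j \<and> 1 \<le> j \<and> j \<le> q+2 \<and> i = q+3)"
  by (auto simp: charq_edges_def)

lemma inE_N: "(v, N i) \<in> charq_edges q \<longleftrightarrow> v = M i \<and> 1 \<le> i \<and> i \<le> q+3"
  by (auto simp: charq_edges_def)

lemma inE_R: "(v, R t) \<in> charq_edges q \<longleftrightarrow>
   (\<exists>i. v = N i \<and> ((i = t \<and> 1\<le>t \<and> t\<le>q+2) \<or> (i = q+3 \<and> 1\<le>t \<and> t\<le>q+2) \<or> (t = q+3 \<and> 1\<le>i \<and> i\<le>q+2)))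
 \<or> (\<exists>i. v = X i \<and> t = 1 \<and> 2\<le>i \<and> i\<le>q+1) \<or> (v = X 1 \<and> t = q+2) \<or> (v = S \<and> (t = 2 \<or> t = 3))"
  by (auto simp: charq_edges_def)

lemma inE_S: "(v, S) \<notin> charq_edges q" "(v, X i) \<notin> charq_edges q"
  by (auto simp: charq_edges_def)

lemma src_iff: "v \<in> charq_sources q \<longleftrightarrow> v = S \<or> (\<exists>i. v = X i \<and> 1\<le>i \<and> i\<le>q+2)"
  by (auto simp: charq_sources_def)

lemma E_tail: "(a,b) \<in> charq_edges q \<Longrightarrow> a \<in> charq_sources q \<or> (\<exists>i. a = M i \<and> b = N i) \<or> (\<exists>i t. a = N i \<and> b = R t)"
  by (auto simp: charq_edges_def charq_sources_def)

lemma finite_E: "finite (charq_edges q)"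
proof -
  let ?V = "{S} \<union> X ` {..q+3} \<union> M ` {..q+3} \<union> N ` {..q+3} \<union> R ` {..q+3}"
  have "charq_edges q \<subseteq> ?V \<times> ?V" by (auto simp: charq_edges_def)
  moreover have "finite (?V \<times> ?V)" by simp
  ultimately show ?thesis by (rule finite_subset)
qed

lemma finite_preds: "finite (preds (charq_edges q) u)"
proof -
  have "preds (charq_edges q) u \<subseteq> fst ` charq_edges q" by (force simp: preds_def)
  then show ?thesis using finite_E finite_subset by blast
qed


lemma mneg_l: "(- A) ** B = - (A ** (B::'a::ring_1^'n^'m))"
  by (simp add: matrix_matrix_mult_def vec_eq_iff sum_negf)
lemma mneg_r: "A ** (- B) = - (A ** (B::'a::ring_1^'n^'m))"
  by (simp add: matrix_matrix_mult_def vec_eq_iff sum_negf)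
lemma mzero_l: "(0::'a::semiring_1^'m^'k) ** B = 0"
  by (simp add: matrix_matrix_mult_def vec_eq_iff)
lemma mzero_r: "A ** (0::'a::semiring_1^'n^'m) = 0"
  by (simp add: matrix_matrix_mult_def vec_eq_iff)
lemma madd_r: "(A + B) ** (C::'a::semiring_1^'n^'m) = A ** C + B ** C"
  by (simp add: matrix_matrix_mult_def vec_eq_iff sum.distrib distrib_right)
lemma msum_mult: "(\<Sum>i\<in>I. f i) ** (B::'a::semiring_1^'n^'m) = (\<Sum>i\<in>I. f i ** B)"
  by (induct I rule: infinite_finite_induct) (simp_all add: mzero_l madd_r)
lemma msum_vmult: "(\<Sum>i\<in>I. f i) *v (x::'a::semiring_1^'n) = (\<Sum>i\<in>I. f i *v x)"
  by (induct I rule: infinite_finite_induct) (simp_all add: matrix_vector_mult_add_rdistrib)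

definition y0 :: "('a::field,'d::finite,node) vlnc \<Rightarrow> (node \<Rightarrow> 'a^'d) \<Rightarrow> node\<times>node \<Rightarrow> 'a^'d" where
  "y0 C x e = srcC C e *v x (fst e)"
definition y1 :: "nat \<Rightarrow> ('a::field,'d::finite,node) vlnc \<Rightarrow> (node \<Rightarrow> 'a^'d) \<Rightarrow> node\<times>node \<Rightarrow> 'a^'d" where
  "y1 q C x e = (\<Sum>v\<in>preds (charq_edges q) (fst e). intC C (v, fst e) e *v y0 C x (v, fst e))"
definition y2 :: "nat \<Rightarrow> ('a::field,'d::finite,node) vlnc \<Rightarrow> (node \<Rightarrow> 'a^'d) \<Rightarrow> node\<times>node \<Rightarrow> 'a^'d" where
  "y2 q C x e = (\<Sum>v\<in>preds (charq_edges q) (fst e). intC C (v, fst e) e *v y1 q C x (v, fst e))"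
definition yc :: "nat \<Rightarrow> ('a::field,'d::finite,node) vlnc \<Rightarrow> (node \<Rightarrow> 'a^'d) \<Rightarrow> node\<times>node \<Rightarrow> 'a^'d" where
  "yc q C x e = (if fst e \<in> charq_sources q then y0 C x e
     else if (\<exists>i. fst e = M i) then y1 q C x e else y2 q C x e)"

lemma predM_src: "(v, M i) \<in> charq_edges q \<Longrightarrow> v \<in> charq_sources q"
  by (auto simp: inE_M src_iff)

lemma yc_ev: "edge_vectors (charq_edges q) (charq_sources q) C x (yc q C x)"
  unfolding edge_vectors_def
proof (intro conjI ballI impI)
  fix e assume "e \<in> charq_edges q" "fst e \<in> charq_sources q"
  then show "yc q C x e = srcC C e *v x (fst e)" by (simp add: yc_def y0_def)
next
  fix e assume e: "e \<in> charq_edges q" and ns: "fst e \<notin> charq_sources q"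
  obtain a b where ab: "e = (a,b)" by force
  have L: "(\<Sum>e'\<in>in_edges (charq_edges q) (fst e). intC C e' e *v yc q C x e')
      = (\<Sum>v\<in>preds (charq_edges q) a. intC C (v, a) e *v yc q C x (v, a))"
    by (simp add: sum_in_edges ab)
  from E_tail[of a b q] e ns ab consider (m) i where "a = M i" "b = N i" | (n) i t where "a = N i" "b = R t" by auto
  then show "yc q C x e = (\<Sum>e'\<in>in_edges (charq_edges q) (fst e). intC C e' e *v yc q C x e')"
  proof cases
    case m
    have "\<forall>v\<in>preds (charq_edges q) a. yc q C x (v,a) = y0 C x (v,a)"
      using m predM_src by (auto simp: preds_def yc_def)
    then show ?thesis unfolding L using ns m ab by (auto simp: yc_def y1_def intro!: sum.cong)
  next
    case n
    have "\<forall>v\<in>preds (charq_edges q) a. yc q C x (v,a) = y1 q C x (v,a)"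
      using n by (auto simp: preds_def yc_def inE_N src_iff)
    then show ?thesis unfolding L using ns n ab by (auto simp: yc_def y2_def src_iff intro!: sum.cong)
  qed
qed

definition L :: "('a::field,'d::finite,node) vlnc \<Rightarrow> nat \<Rightarrow> node \<Rightarrow> 'a^'d^'d" where
  "L C i v = intC C (v, M i) (M i, N i) ** srcC C (v, M i)"

lemma yc_M: "yc q C x (M i, N i) = (\<Sum>v\<in>preds (charq_edges q) (M i). L C i v *v x v)"
  by (simp add: yc_def src_iff y1_def y0_def L_def matrix_vector_mul_assoc)

definition dl :: "node \<Rightarrow> 'a::field^'d \<Rightarrow> node \<Rightarrow> 'a^'d" where
  "dl w a = (\<lambda>v. if v = w then a else 0)"

lemma yc_M_dl: "yc q C (dl w a) (M i, N i) = (if (w, M i) \<in> charq_edges q then L C i w *v a else 0)"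
proof -
  have "yc q C (dl w a) (M i, N i) = (\<Sum>v\<in>preds (charq_edges q) (M i). if v = w then L C i w *v a else 0)"
    unfolding yc_M by (rule sum.cong) (auto simp: dl_def)
  also have "\<dots> = (if (w, M i) \<in> charq_edges q then L C i w *v a else 0)"
    using finite_preds[of q "M i", unfolded preds_def] by (simp add: sum.delta' preds_def)
  finally show ?thesis .
qed

lemma yc_N: assumes "(N i, R t) \<in> charq_edges q"
  shows "yc q C x (N i, R t) = intC C (M i, N i) (N i, R t) *v yc q C x (M i, N i)"
proof -
  have i: "1 \<le> i" "i \<le> q+3" using assms by (auto simp: inE_R)
  have P: "preds (charq_edges q) (N i) = {M i}" using i by (auto simp: preds_def inE_N)
  show ?thesis by (simp add: yc_def src_iff y2_def P y1_def)
qed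

lemma yc_src: "v \<in> charq_sources q \<Longrightarrow> yc q C x (v, u) = srcC C (v,u) *v x v"
  by (simp add: yc_def y0_def)

lemma term_sum:
  assumes P: "preds (charq_edges q) (R t) = N ` I \<union> J" and J: "J \<subseteq> charq_sources q"
    and fin: "finite I" "finite J"
  shows "(\<Sum>e\<in>in_edges (charq_edges q) (R t). B e *v yc q C x e)
    = (\<Sum>i\<in>I. (B (N i, R t) ** intC C (M i, N i) (N i, R t)) *v yc q C x (M i, N i))
      + (\<Sum>u\<in>J. (B (u, R t) ** srcC C (u, R t)) *v x u)"
proof -
  have d: "N ` I \<inter> J = {}" using J by (auto simp: src_iff)
  have inE: "\<And>i. i \<in> I \<Longrightarrow> (N i, R t) \<in> charq_edges q" using P by (auto simp: preds_def set_eq_iff)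
  have "(\<Sum>e\<in>in_edges (charq_edges q) (R t). B e *v yc q C x e)
      = (\<Sum>v\<in>N ` I. B (v, R t) *v yc q C x (v, R t)) + (\<Sum>v\<in>J. B (v, R t) *v yc q C x (v, R t))"
    unfolding sum_in_edges P using d fin by (simp add: sum.union_disjoint)
  also have "(\<Sum>v\<in>N ` I. B (v, R t) *v yc q C x (v, R t)) = (\<Sum>i\<in>I. (B (N i, R t) ** intC C (M i, N i) (N i, R t)) *v yc q C x (M i, N i))"
    by (simp add: sum.reindex inj_on_def yc_N inE matrix_vector_mul_assoc cong: sum.cong)
  also have "(\<Sum>v\<in>J. B (v, R t) *v yc q C x (v, R t)) = (\<Sum>u\<in>J. (B (u, R t) ** srcC C (u, R t)) *v x u)"
    using J by (auto simp: yc_src matrix_vector_mul_assoc intro!: sum.cong)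
  finally show ?thesis .
qed

definition JJ :: "nat \<Rightarrow> nat \<Rightarrow> node set" where
  "JJ q t = (if t = 2 \<or> t = 3 then {S} else {}) \<union> (if t = q+2 then {X 1} else {})"

lemma preds_Rt: assumes "2 \<le> q" "2 \<le> t" "t \<le> q+2"
  shows "preds (charq_edges q) (R t) = N ` {t, q+3} \<union> JJ q t"
  using assms by (auto simp: preds_def inE_R JJ_def)

lemma preds_Rlast: "2 \<le> q \<Longrightarrow> preds (charq_edges q) (R (q+3)) = N ` {1..q+2}"
  by (auto simp: preds_def inE_R)

lemma preds_Rlast': "2 \<le> q \<Longrightarrow> preds (charq_edges q) (R (q+3)) = N ` {1..q+2} \<union> {}"
  using preds_Rlast by simp

lemma preds_R1: "preds (charq_edges q) (R 1) = N ` {1, q+3} \<union> X ` {2..q+1}"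
  by (auto simp: preds_def inE_R)


lemma core:
  fixes G H D :: "nat \<Rightarrow> 'a::field^'d^'d" and LL :: "nat \<Rightarrow> node \<Rightarrow> 'a^'d^'d"
    and W :: "node \<Rightarrow> 'a^'d^'d"
  assumes q: "2 \<le> q"
    and a: "\<forall>t\<in>{2..q+2}. H t ** W (X t) = mat 1"
    and b: "\<forall>t\<in>{2..q+2}. \<forall>w. (w, M t) \<in> charq_edges q \<longrightarrow> G t ** LL t w + H t ** W w = 0"
    and c: "\<forall>w. (\<Sum>i\<in>{1..q+2}. if (w, M i) \<in> charq_edges q then D i ** LL i w else 0)
               = (if w = X 1 then mat 1 else 0)"
    and nz: "of_nat q \<noteq> (0::'a)"
  shows "LL 1 S = 0"
proof -
  have WH: "W (X j) ** H j = mat 1" if "j \<in> {2..q+2}" for j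
    using a that matrix_left_right_inverse by blast
  have b': "G t ** LL t w = - (H t ** W w)" if "t \<in> {2..q+2}" "(w, M t) \<in> charq_edges q" for t w
    using b that by (simp add: eq_neg_iff_add_eq_0)
  have "\<exists>K. K ** G i = mat 1" if i: "i \<in> {2..q+2}" for i
  proof -
    define j where "j = (if i = 2 then 3 else (2::nat))"
    have j: "j \<in> {2..q+2}" "j \<noteq> i" using q i by (auto simp: j_def)
    have jE: "(X j, M i) \<in> charq_edges q" using j i by (auto simp: inE_M)
    have "G i ** (- (LL i (X j) ** H j ** W (X i))) = - ((G i ** LL i (X j)) ** H j ** W (X i))"
      by (simp add: mneg_r matrix_mul_assoc)
    also have "\<dots> = H i ** (W (X j) ** H j) ** W (X i)"
      using b'[OF i jE] by (simp add: mneg_l matrix_mul_assoc)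
    also have "\<dots> = mat 1" using WH[OF j(1)] a i by simp
    finally show ?thesis using matrix_left_right_inverse by blast
  qed
  then obtain K where K: "\<forall>i\<in>{2..q+2}. K i ** G i = mat 1" by metis
  define F where "F i = D i ** K i ** H i" for i
  have DL: "D i ** LL i w = - (F i ** W w)" if "i \<in> {2..q+2}" "(w, M i) \<in> charq_edges q" for i w
  proof -
    have "D i ** LL i w = D i ** (K i ** G i) ** LL i w" using K that by simp
    also have "\<dots> = D i ** K i ** (G i ** LL i w)" by (simp add: matrix_mul_assoc)
    also have "\<dots> = - (F i ** W w)" using b'[OF that] by (simp add: F_def mneg_r matrix_mul_assoc)
    finally show ?thesis .
  qed
  have split: "{1..q+2} = insert 1 {2..q+2}" by auto
  have Fsum: "(\<Sum>i\<in>{2..q+2} - {j}. F i) = 0" if j: "j \<in> {2..q+2}" for j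
  proof -
    have n1: "(X j, M 1) \<notin> charq_edges q" using j by (auto simp: inE_M)
    have "(\<Sum>i\<in>{1..q+2}. if (X j, M i) \<in> charq_edges q then D i ** LL i (X j) else 0) = 0"
      using c j by auto
    also have "(\<Sum>i\<in>{1..q+2}. if (X j, M i) \<in> charq_edges q then D i ** LL i (X j) else 0)
        = (\<Sum>i\<in>{2..q+2}. if i \<noteq> j then - (F i ** W (X j)) else 0)"
      unfolding split using n1 j
      by (auto simp: DL inE_M intro!: sum.cong)
    also have "\<dots> = (\<Sum>i\<in>{2..q+2} - {j}. - (F i ** W (X j)))"
    proof -
      have e: "{2..q+2} - {j} = {i\<in>{2..q+2}. i \<noteq> j}" by auto
      show ?thesis unfolding e by (rule sum.inter_filter[symmetric]) simp
    qed
    also have "\<dots> = - ((\<Sum>i\<in>{2..q+2} - {j}. F i) ** W (X j))"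
      by (simp add: msum_mult sum_negf)
    finally have "(\<Sum>i\<in>{2..q+2} - {j}. F i) ** W (X j) = 0" by simp
    then have "(\<Sum>i\<in>{2..q+2} - {j}. F i) ** W (X j) ** H j = 0" by (simp add: mzero_l)
    then show ?thesis using WH[OF j] by (simp add: matrix_mul_assoc[symmetric])
  qed
  define T where "T = (\<Sum>i\<in>{2..q+2}. F i)"
  have FT: "F j = T" if "j \<in> {2..q+2}" for j
    using Fsum[OF that] that by (simp add: T_def sum_diff1)
  have "(\<Sum>i\<in>{2..q+2}. F i) = (\<Sum>i\<in>{2..q+2}. T)" by (rule sum.cong) (simp_all add: FT)
  then have "T = (\<Sum>i\<in>{2..q+2}. T)" by (simp only: T_def)
  also have "\<dots> = of_nat (q+1) * T" by simp
  finally have "of_nat q * T = 0" by (simp add: algebra_simps)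
  then have T0: "T = 0" using nz
    by (simp add: vec_eq_iff of_nat_index)
  have DL0: "(if (w, M i) \<in> charq_edges q then D i ** LL i w else 0) = 0" if "i \<in> {2..q+2}" for i w
    using DL[OF that] FT[OF that] T0 by (simp add: mzero_l)
  have c1: "(if (w, M 1) \<in> charq_edges q then D 1 ** LL 1 w else 0) = (if w = X 1 then mat 1 else 0)" for w
  proof -
    have e1: "(\<Sum>i\<in>{1..q+2}. if (w, M i) \<in> charq_edges q then D i ** LL i w else 0)
      = (if (w, M 1) \<in> charq_edges q then D 1 ** LL 1 w else 0)"
      unfolding split by (simp add: DL0)
    show ?thesis using trans[OF e1[symmetric] c[rule_format, of w]] .
  qed
  have "D 1 ** LL 1 (X 1) = mat 1" using c1[where w="X 1"] q by (simp add: inE_M)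
  then have inv: "LL 1 (X 1) ** D 1 = mat 1" using matrix_left_right_inverse by blast
  have "D 1 ** LL 1 S = 0" using c1[where w=S] by (simp add: inE_M)
  then have "LL 1 (X 1) ** (D 1 ** LL 1 S) = 0" by (simp add: mzero_r)
  then show ?thesis using inv by (simp add: matrix_mul_assoc)
qed


lemma JJ_out: "(w, M t) \<in> charq_edges q \<Longrightarrow> 2 \<le> t \<Longrightarrow> t \<le> q+2 \<Longrightarrow> 2 \<le> q \<Longrightarrow> w \<notin> JJ q t"
  by (auto simp: inE_M JJ_def)

lemma to_last: "2 \<le> q \<Longrightarrow> (w, M t) \<in> charq_edges q \<Longrightarrow> (w, M (q+3)) \<in> charq_edges q"
  by (auto simp: inE_M)

lemma only_if:
  fixes C :: "('a::field,'d::finite,node) vlnc"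
  assumes q: "2 \<le> q"
    and sol: "is_vlnc_solution (charq_edges q) (charq_sources q) (charq_terminals q) (charq_demands q) C"
    and sc: "s_coeff_on_e1 q C A1" and nz: "of_nat q \<noteq> (0::'a)"
  shows "A1 = 0"
proof -
  have dec: "(\<Sum>e\<in>in_edges (charq_edges q) t. decC C t v e *v yc q C x e) = x v"
    if "t \<in> charq_terminals q" "v \<in> charq_demands q t" for x t v
    using sol yc_ev that unfolding is_vlnc_solution_def by blast
  define G where "G t = decC C (R t) (X t) (N t, R t) ** intC C (M t, N t) (N t, R t)" for t
  define H where "H t = decC C (R t) (X t) (N (q+3), R t) ** intC C (M (q+3), N (q+3)) (N (q+3), R t)" for t
  define D where "D i = decC C (R (q+3)) (X 1) (N i, R (q+3)) ** intC C (M i, N i) (N i, R (q+3))" for i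
  define K where "K t u = decC C (R t) (X t) (u, R t) ** srcC C (u, R t)" for t u
  have teq: "G t *v yc q C x (M t, N t) + H t *v yc q C x (M (q+3), N (q+3))
      + (\<Sum>u\<in>JJ q t. K t u *v x u) = x (X t)" if t: "t \<in> {2..q+2}" for t x
  proof -
    have T: "R t \<in> charq_terminals q" using t by (auto simp: charq_terminals_def)
    have Dm: "X t \<in> charq_demands q (R t)" using t by (auto simp: charq_demands_def)
    have fJ: "finite (JJ q t)" by (simp add: JJ_def)
    have JS: "JJ q t \<subseteq> charq_sources q" by (auto simp: JJ_def src_iff)
    have ne: "t \<noteq> q+3" using t by auto
    have t1: "2 \<le> t" "t \<le> q+2" using t by auto
    have fI: "finite {t, q+3}" by simp
    show ?thesis
      using dec[OF T Dm, of x] unfolding term_sum[OF preds_Rt[OF q t1] JS fI fJ]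
      using t ne by (simp add: G_def H_def K_def)
  qed
  have a: "\<forall>t\<in>{2..q+2}. H t ** L C (q+3) (X t) = mat 1"
  proof
    fix t assume t: "t \<in> {2..q+2}"
    have nE: "(X t, M t) \<notin> charq_edges q" using t by (auto simp: inE_M)
    have E3: "(X t, M (q+3)) \<in> charq_edges q" using t by (simp add: inE_M)
    have nJ: "X t \<notin> JJ q t" using t by (auto simp: JJ_def)
    have "H t ** L C (q+3) (X t) *v a = mat 1 *v a" for a
    proof -
      have z: "(\<Sum>u\<in>JJ q t. K t u *v dl (X t) a u) = 0"
        using nJ by (intro sum.neutral) (auto simp: dl_def)
      show ?thesis using teq[OF t, of "dl (X t) a"] unfolding yc_M_dl z using nE E3
        by (simp add: dl_def matrix_vector_mul_assoc)
    qed
    then show "H t ** L C (q+3) (X t) = mat 1" using matrix_eq by blast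
  qed
  have b: "\<forall>t\<in>{2..q+2}. \<forall>w. (w, M t) \<in> charq_edges q \<longrightarrow> G t ** L C t w + H t ** L C (q+3) w = 0"
  proof (intro ballI allI impI)
    fix t w assume t: "t \<in> {2..q+2}" and wE: "(w, M t) \<in> charq_edges q"
    have E3: "(w, M (q+3)) \<in> charq_edges q" using to_last[OF q wE] .
    have nJ: "w \<notin> JJ q t" using JJ_out[OF wE] t q by auto
    have nX: "w \<noteq> X t" using wE t by (auto simp: inE_M)
    have "(G t ** L C t w + H t ** L C (q+3) w) *v a = 0 *v a" for a
    proof -
      have z: "(\<Sum>u\<in>JJ q t. K t u *v dl w a u) = 0"
        using nJ by (intro sum.neutral) (auto simp: dl_def)
      show ?thesis using teq[OF t, of "dl w a"] unfolding yc_M_dl z using wE E3 nX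
        by (simp add: dl_def matrix_vector_mul_assoc matrix_vector_mult_add_rdistrib)
    qed
    then show "G t ** L C t w + H t ** L C (q+3) w = 0" using matrix_eq by blast
  qed
  have c: "\<forall>w. (\<Sum>i\<in>{1..q+2}. if (w, M i) \<in> charq_edges q then D i ** L C i w else 0)
               = (if w = X 1 then mat 1 else 0)"
  proof
    fix w
    have T: "R (q+3) \<in> charq_terminals q" by (auto simp: charq_terminals_def)
    have Dm: "X 1 \<in> charq_demands q (R (q+3))" by (simp add: charq_demands_def)
    have "(\<Sum>i\<in>{1..q+2}. if (w, M i) \<in> charq_edges q then D i ** L C i w else 0) *v a
        = (if w = X 1 then mat 1 else 0) *v a" for a
    proof -
      have e: "(\<Sum>i\<in>{1..q+2}. D i *v yc q C (dl w a) (M i, N i)) = dl w a (X 1)"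
        using dec[OF T Dm, of "dl w a"]
        unfolding term_sum[OF preds_Rlast'[OF q] empty_subsetI finite_atLeastAtMost finite.emptyI]
        by (simp add: D_def)
      have "(\<Sum>i\<in>{1..q+2}. if (w, M i) \<in> charq_edges q then D i ** L C i w else 0) *v a
        = (\<Sum>i\<in>{1..q+2}. (if (w, M i) \<in> charq_edges q then D i ** L C i w else 0) *v a)"
        by (rule msum_vmult)
      also have "\<dots> = (\<Sum>i\<in>{1..q+2}. D i *v yc q C (dl w a) (M i, N i))"
        by (rule sum.cong) (simp_all add: yc_M_dl matrix_vector_mul_assoc)
      also have "\<dots> = (if w = X 1 then mat 1 else 0) *v a" unfolding e by (simp add: dl_def)
      finally show ?thesis .
    qed
    then show "(\<Sum>i\<in>{1..q+2}. if (w, M i) \<in> charq_edges q then D i ** L C i w else 0)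
               = (if w = X 1 then mat 1 else 0)" using matrix_eq by blast
  qed
  have L1S: "L C 1 S = 0" using core[OF q a b c nz] .
  from sc obtain M1 where M1: "\<forall>x y. edge_vectors (charq_edges q) (charq_sources q) C x y \<longrightarrow>
              y e1 = M1 *v x (X 1) + A1 *v x S" unfolding s_coeff_on_e1_def by blast
  have "A1 *v a = 0 *v a" for a
  proof -
    have "yc q C (dl S a) e1 = M1 *v dl S a (X 1) + A1 *v dl S a S" using M1 yc_ev by blast
    moreover have "yc q C (dl S a) e1 = 0"
      unfolding e1_def yc_M_dl L1S by (simp add: inE_M)
    ultimately show ?thesis by (simp add: dl_def)
  qed
  then show "A1 = 0" using matrix_eq by blast
qed


definition C0 :: "nat \<Rightarrow> ('a::field,'d::finite,node) vlnc" where
  "C0 q = \<lparr>srcC = (\<lambda>_. mat 1), intC = (\<lambda>_ _. mat 1),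
     decC = (\<lambda>t v e. if fst e = N (q+3) \<or> t = R (q+3) then mat 1 else - mat 1)\<rparr>"

lemma mneg_v: "(- A) *v v = - (A *v (v::'a::ring_1^'n))"
  by (simp add: matrix_vector_mult_def vec_eq_iff sum_negf)

lemma dec_C0: "decC (C0 q) t w e *v v = (if fst e = N (q+3) \<or> t = R (q+3) then v else - v)"
  by (simp add: C0_def mneg_v)

lemma ev_C0:
  assumes ev: "edge_vectors (charq_edges q) (charq_sources q) (C0 q) x y"
  shows "(v,u) \<in> charq_edges q \<Longrightarrow> v \<in> charq_sources q \<Longrightarrow> y (v,u) = x v"
    and "(v,u) \<in> charq_edges q \<Longrightarrow> v \<notin> charq_sources q \<Longrightarrow> y (v,u) = (\<Sum>w\<in>preds (charq_edges q) v. y (w, v))"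
  using ev by (auto simp: edge_vectors_def C0_def sum_in_edges)

lemma yM_C0:
  assumes ev: "edge_vectors (charq_edges q) (charq_sources q) (C0 q) x y"
    and i: "1 \<le> i" "i \<le> q+3"
  shows "y (M i, N i) = (\<Sum>v\<in>preds (charq_edges q) (M i). x v)"
proof -
  have E: "(M i, N i) \<in> charq_edges q" using i by (simp add: inE_N)
  have "y (M i, N i) = (\<Sum>w\<in>preds (charq_edges q) (M i). y (w, M i))"
    using ev_C0(2)[OF ev E] by (simp add: src_iff)
  also have "\<dots> = (\<Sum>v\<in>preds (charq_edges q) (M i). x v)"
    by (rule sum.cong) (auto simp: preds_def intro!: ev_C0(1)[OF ev] predM_src)
  finally show ?thesis .
qed

lemma yN_C0:
  assumes ev: "edge_vectors (charq_edges q) (charq_sources q) (C0 q) x y"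
    and E: "(N i, R t) \<in> charq_edges q"
  shows "y (N i, R t) = y (M i, N i)"
proof -
  have i: "1 \<le> i" "i \<le> q+3" using E by (auto simp: inE_R)
  have P: "preds (charq_edges q) (N i) = {M i}" using i by (auto simp: preds_def inE_N)
  show ?thesis using ev_C0(2)[OF ev E] by (simp add: src_iff P)
qed

lemma term_sum2:
  assumes ev: "edge_vectors (charq_edges q) (charq_sources q) (C0 q) x y"
    and P: "preds (charq_edges q) (R t) = N ` I \<union> J" and J: "J \<subseteq> charq_sources q"
    and fin: "finite I" "finite J"
  shows "(\<Sum>e\<in>in_edges (charq_edges q) (R t). B e *v y e)
    = (\<Sum>i\<in>I. B (N i, R t) *v (\<Sum>v\<in>preds (charq_edges q) (M i). x v))
      + (\<Sum>u\<in>J. B (u, R t) *v x u)"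
proof -
  have d: "N ` I \<inter> J = {}" using J by (auto simp: src_iff)
  have inE: "\<And>i. i \<in> I \<Longrightarrow> (N i, R t) \<in> charq_edges q" using P by (auto simp: preds_def set_eq_iff)
  have ib1: "1 \<le> i" if "i \<in> I" for i using inE[OF that] by (auto simp: inE_R)
  have ib2: "i \<le> q+3" if "i \<in> I" for i using inE[OF that] by (auto simp: inE_R)
  have "(\<Sum>e\<in>in_edges (charq_edges q) (R t). B e *v y e)
      = (\<Sum>v\<in>N ` I. B (v, R t) *v y (v, R t)) + (\<Sum>v\<in>J. B (v, R t) *v y (v, R t))"
    unfolding sum_in_edges P using d fin by (simp add: sum.union_disjoint)
  also have "(\<Sum>v\<in>N ` I. B (v, R t) *v y (v, R t)) = (\<Sum>i\<in>I. B (N i, R t) *v (\<Sum>v\<in>preds (charq_edges q) (M i). x v))"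
  proof -
    have "(\<Sum>v\<in>N ` I. B (v, R t) *v y (v, R t)) = (\<Sum>i\<in>I. B (N i, R t) *v y (M i, N i))"
      by (simp add: sum.reindex inj_on_def yN_C0[OF ev] inE)
    also have "\<dots> = (\<Sum>i\<in>I. B (N i, R t) *v (\<Sum>v\<in>preds (charq_edges q) (M i). x v))"
    proof (rule sum.cong[OF refl])
      fix i assume "i \<in> I"
      then show "B (N i, R t) *v y (M i, N i) = B (N i, R t) *v (\<Sum>v\<in>preds (charq_edges q) (M i). x v)"
        using yM_C0[OF ev ib1 ib2] by simp
    qed
    finally show ?thesis .
  qed
  also have "(\<Sum>v\<in>J. B (v, R t) *v y (v, R t)) = (\<Sum>u\<in>J. B (u, R t) *v x u)"
    using J P by (intro sum.cong) (auto simp: preds_def set_eq_iff intro!: arg_cong[where f="(*v) _"] ev_C0(1)[OF ev])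
  finally show ?thesis .
qed

lemma sumX: "(\<Sum>v\<in>X ` A. f v) = (\<Sum>j\<in>A. f (X j))"
  by (simp add: sum.reindex inj_on_def)

lemma predsM1: "preds (charq_edges q) (M 1) = {X 1, S}"
  by (auto simp: preds_def inE_M)

lemma predsMmid: "2 \<le> i \<Longrightarrow> i \<le> q+2 \<Longrightarrow> 2 \<le> q \<Longrightarrow> preds (charq_edges q) (M i) =
   ((if i \<le> q+1 then {X 1} else {}) \<union> (if 4 \<le> i then {S} else {})) \<union> X ` ({2..q+2} - {i})"
  by (auto simp: preds_def inE_M)

lemma predsMlast: "2 \<le> q \<Longrightarrow> preds (charq_edges q) (M (q+3)) = {S, X 1} \<union> X ` {2..q+2}"
  by (auto simp: preds_def inE_M)

lemma YvM1: "(\<Sum>v\<in>preds (charq_edges q) (M 1). x v) = x (X 1) + x S"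
  unfolding predsM1 by simp

lemma YvMlast: "2 \<le> q \<Longrightarrow> (\<Sum>v\<in>preds (charq_edges q) (M (q+3)). x v) = x S + x (X 1) + (\<Sum>j\<in>{2..q+2}. x (X j))"
proof -
  assume q: "2 \<le> q"
  have e: "{S, X 1} \<union> X ` {2..q+2} = insert S (insert (X 1) (X ` {2..q+2}))" by auto
  have n1: "X 1 \<notin> X ` {2..q+2}" by auto
  have n2: "S \<notin> insert (X 1) (X ` {2..q+2})" by auto
  show ?thesis
    unfolding predsMlast[OF q] e sum.insert[OF finite_insert[THEN iffD2, OF finite_imageI[OF finite_atLeastAtMost]] n2]
      sum.insert[OF finite_imageI[OF finite_atLeastAtMost] n1] sumX
    by (simp only: add.assoc)
qed

lemma YvMmid: fixes x :: "node \<Rightarrow> 'b::ab_group_add" assumes "2 \<le> i" "i \<le> q+2" "2 \<le> q"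
  shows "(\<Sum>v\<in>preds (charq_edges q) (M i). x v) = (if i \<le> q+1 then x (X 1) else 0) + (if 4 \<le> i then x S else 0)
     + ((\<Sum>j\<in>{2..q+2}. x (X j)) - x (X i))"
proof -
  have d: "((if i \<le> q+1 then {X 1} else {}) \<union> (if 4 \<le> i then {S} else {})) \<inter> X ` ({2..q+2} - {i}) = {}" by auto
  have "(\<Sum>v\<in>preds (charq_edges q) (M i). x v) = (\<Sum>v\<in>(if i \<le> q+1 then {X 1} else {}) \<union> (if 4 \<le> i then {S} else {}). x v)
      + (\<Sum>v\<in>X ` ({2..q+2} - {i}). x v)"
    unfolding predsMmid[OF assms] by (rule sum.union_disjoint) (use d in auto)
  also have "(\<Sum>v\<in>(if i \<le> q+1 then {X 1} else {}) \<union> (if 4 \<le> i then {S} else {}). x v)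
      = (if i \<le> q+1 then x (X 1) else 0) + (if 4 \<le> i then x S else 0)"
    by (auto simp: add.commute)
  also have "(\<Sum>v\<in>X ` ({2..q+2} - {i}). x v) = (\<Sum>j\<in>{2..q+2}. x (X j)) - x (X i)"
  proof -
    have mem: "i \<in> {2..q+2}" using assms by simp
    show ?thesis unfolding sumX by (subst sum_diff1) (simp_all only: mem if_True finite_atLeastAtMost)
  qed
  finally show ?thesis .
qed


lemma of_nat_vec0: "of_nat q = (0::'a::field) \<Longrightarrow> (of_nat q :: 'a^'d) = 0"
  by (simp add: vec_eq_iff of_nat_index)

lemma if_dir:
  fixes q :: nat
  assumes q: "2 \<le> q" and ch: "of_nat q = (0::'a::field)"
  shows "is_vlnc_solution (charq_edges q) (charq_sources q) (charq_terminals q) (charq_demands q)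
           (C0 q :: ('a,'d::finite,node) vlnc)"
  unfolding is_vlnc_solution_def
proof (intro allI impI ballI)
  fix x :: "node \<Rightarrow> 'a^'d" and y t v
  assume ev: "edge_vectors (charq_edges q) (charq_sources q) (C0 q) x y"
    and t: "t \<in> charq_terminals q" and v: "v \<in> charq_demands q t"
  define Yv where "Yv i = (\<Sum>w\<in>preds (charq_edges q) (M i). x w)" for i
  define Xs where "Xs = (\<Sum>j\<in>{2..q+2}. x (X j))"
  have Y1: "Yv 1 = x (X 1) + x S" unfolding Yv_def by (rule YvM1)
  have Yl: "Yv (q+3) = x S + x (X 1) + Xs" unfolding Yv_def Xs_def by (rule YvMlast[OF q])
  have Ym: "Yv i = (if i \<le> q+1 then x (X 1) else 0) + (if 4 \<le> i then x S else 0) + (Xs - x (X i))"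
    if "2 \<le> i" "i \<le> q+2" for i
    unfolding Yv_def Xs_def by (rule YvMmid[OF that q])
  have dn: "decC (C0 q) (R k) v (N i, R k) *v w = - w" if "k \<noteq> q+3" "i \<noteq> q+3" for k i w
    using that by (simp add: dec_C0)
  have dp: "decC (C0 q) (R k) v (N (q+3), R k) *v w = w" for k w
    by (simp add: dec_C0)
  have dl: "decC (C0 q) (R (q+3)) v e *v w = w" for e w
    by (simp add: dec_C0)
  have ds: "decC (C0 q) (R k) v (u, R k) *v w = - w" if "k \<noteq> q+3" "u \<in> charq_sources q" for k u w
    using that by (auto simp: dec_C0 src_iff)
  obtain k where k: "t = R k" "1 \<le> k" "k \<le> q+3" using t by (auto simp: charq_terminals_def)
  consider "k = 1" | "2 \<le> k \<and> k \<le> q+2" | "k = q+3" using k by linarith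
  then show "(\<Sum>e\<in>in_edges (charq_edges q) t. decC (C0 q) t v e *v y e) = x v"
  proof cases
    case 1
    have vv: "v = X (q+2)" using v k 1 by (simp add: charq_demands_def)
    have J: "X ` {2..q+1} \<subseteq> charq_sources q" by (auto simp: src_iff)
    have "(\<Sum>e\<in>in_edges (charq_edges q) t. decC (C0 q) t v e *v y e)
        = (\<Sum>i\<in>{1, q+3}. decC (C0 q) (R 1) v (N i, R 1) *v Yv i)
          + (\<Sum>u\<in>X ` {2..q+1}. decC (C0 q) (R 1) v (u, R 1) *v x u)"
      unfolding k 1 Yv_def
      by (rule term_sum2[OF ev preds_R1 J finite.insertI[OF finite.insertI[OF finite.emptyI]] finite_imageI[OF finite_atLeastAtMost], where B = "decC (C0 q) (R 1) v"])
    also have sJ: "(\<Sum>u\<in>X ` {2..q+1}. decC (C0 q) (R 1) v (u, R 1) *v x u) = - (\<Sum>j\<in>{2..q+1}. x (X j))"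
    proof -
      have "(\<Sum>u\<in>X ` {2..q+1}. decC (C0 q) (R 1) v (u, R 1) *v x u) = (\<Sum>u\<in>X ` {2..q+1}. - x u)"
        by (rule sum.cong[OF refl]) (use J in \<open>auto intro!: ds\<close>)
      then show ?thesis by (simp only: sum_negf sumX)
    qed
    also have "(\<Sum>i\<in>{1, q+3}. decC (C0 q) (R 1) v (N i, R 1) *v Yv i) = - Yv 1 + Yv (q+3)"
      by (simp add: dn dp)
    also have "(\<Sum>j\<in>{2..q+1}. x (X j)) = Xs - x (X (q+2))"
    proof -
      have e: "{2..q+2} - {q+2} = {2..q+1}" by auto
      have mem: "q+2 \<in> {2..q+2}" by simp
      have "(\<Sum>j\<in>{2..q+2} - {q+2}. x (X j)) = Xs - x (X (q+2))"
        unfolding Xs_def by (subst sum_diff1) (simp_all only: mem if_True finite_atLeastAtMost)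
      then show ?thesis unfolding e .
    qed
    finally show ?thesis using Y1 Yl vv by (simp add: algebra_simps)
  next
    case 2
    have vv: "v = X k" using v k 2 by (auto simp: charq_demands_def)
    have J: "JJ q k \<subseteq> charq_sources q" by (auto simp: JJ_def src_iff)
    have fJ: "finite (JJ q k)" by (simp add: JJ_def)
    have ne: "k \<noteq> q+3" using 2 by auto
    have "(\<Sum>e\<in>in_edges (charq_edges q) t. decC (C0 q) t v e *v y e)
        = (\<Sum>i\<in>{k, q+3}. decC (C0 q) (R k) v (N i, R k) *v Yv i)
          + (\<Sum>u\<in>JJ q k. decC (C0 q) (R k) v (u, R k) *v x u)"
      unfolding k Yv_def
      by (rule term_sum2[OF ev preds_Rt[OF q] J finite.insertI[OF finite.insertI[OF finite.emptyI]] fJ, where B = "decC (C0 q) (R k) v"]) (use 2 in auto)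
    also have "(\<Sum>u\<in>JJ q k. decC (C0 q) (R k) v (u, R k) *v x u) = (\<Sum>u\<in>JJ q k. - x u)"
      by (rule sum.cong[OF refl]) (use J ne in \<open>auto intro!: ds\<close>)
    also have "(\<Sum>i\<in>{k, q+3}. decC (C0 q) (R k) v (N i, R k) *v Yv i) = - Yv k + Yv (q+3)"
      using ne by (simp add: dn dp)
    also have "(\<Sum>u\<in>JJ q k. - x u) = - (\<Sum>u\<in>JJ q k. x u)" by (simp only: sum_negf)
    also have "(\<Sum>u\<in>JJ q k. x u) = (if k = 2 \<or> k = 3 then x S else 0) + (if k = q+2 then x (X 1) else 0)"
      using q 2 by (auto simp: JJ_def)
    finally have fin: "(\<Sum>e\<in>in_edges (charq_edges q) t. decC (C0 q) t v e *v y e) =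
       - Yv k + Yv (q+3) - ((if k = 2 \<or> k = 3 then x S else 0) + (if k = q+2 then x (X 1) else 0))" by simp
    have Yk: "Yv k = (if k \<le> q+1 then x (X 1) else 0) + (if 4 \<le> k then x S else 0) + (Xs - x (X k))"
      using Ym[of k] 2 by simp
    show ?thesis unfolding fin unfolding Yk Yl vv using 2 q
      by (cases "k = 2 \<or> k = 3"; cases "k = q+2") (auto simp: algebra_simps)
  next
    case 3
    have vv: "v = X 1" using v k 3 by (simp add: charq_demands_def)
    have "(\<Sum>e\<in>in_edges (charq_edges q) t. decC (C0 q) t v e *v y e)
        = (\<Sum>i\<in>{1..q+2}. decC (C0 q) (R (q+3)) v (N i, R (q+3)) *v Yv i)
          + (\<Sum>u\<in>{}. decC (C0 q) (R (q+3)) v (u, R (q+3)) *v x u)"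
      unfolding k 3 Yv_def
      by (rule term_sum2[OF ev preds_Rlast'[OF q] empty_subsetI finite_atLeastAtMost finite.emptyI, where B = "decC (C0 q) (R (q+3)) v"])
    also have "\<dots> = (\<Sum>i\<in>{1..q+2}. Yv i)" by (simp add: dl)
    also have "\<dots> = Yv 1 + (\<Sum>i\<in>{2..q+2}. Yv i)"
    proof -
      have "{1..q+2} = insert 1 {2..q+2}" by auto
      then show ?thesis by simp
    qed
    also have "(\<Sum>i\<in>{2..q+2}. Yv i) = (\<Sum>i\<in>{2..q+2}. ((x (X 1) + x S + Xs) - x (X i))
         - (if i = q+2 then x (X 1) else 0) - (if i = 2 then x S else 0) - (if i = 3 then x S else 0))"
    proof (rule sum.cong[OF refl])
      fix i assume i: "i \<in> {2..q+2}"
      then show "Yv i = ((x (X 1) + x S + Xs) - x (X i))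
         - (if i = q+2 then x (X 1) else 0) - (if i = 2 then x S else 0) - (if i = 3 then x S else 0)"
        using Ym[of i] q by (auto simp: algebra_simps)
    qed
    also have "\<dots> = of_nat (q+1) * (x (X 1) + x S + Xs) - Xs - x (X 1) - x S - x S"
      using q by (simp add: sum_subtractf Xs_def)
    also have "of_nat (q+1) * (x (X 1) + x S + Xs) = x (X 1) + x S + Xs"
      using of_nat_vec0[OF ch, where 'd='d] by (simp add: algebra_simps)
    finally show ?thesis using Y1 vv by (simp add: algebra_simps)
  qed
qed

lemma if_dir2: "s_coeff_on_e1 q (C0 q :: ('a::field,'d::finite,node) vlnc) (mat 1)"
  unfolding s_coeff_on_e1_def
proof (intro exI[of _ "mat 1"] allI impI)
  fix x :: "node \<Rightarrow> 'a^'d" and y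
  assume ev: "edge_vectors (charq_edges q) (charq_sources q) (C0 q) x y"
  show "y e1 = mat 1 *v x (X 1) + mat 1 *v x S"
    unfolding e1_def using yM_C0[OF ev, of 1] YvM1[where q=q and x=x] by simp
qed

lemma mat1_nz: "(mat 1 :: 'a::field^'d::finite^'d) \<noteq> 0"
proof
  assume "(mat 1 :: 'a^'d^'d) = 0"
  then have "(mat 1 :: 'a^'d^'d) $ undefined $ undefined = 0 $ undefined $ undefined" by simp
  then show False by (simp add: mat_def)
qed

theorem lemma3:
  fixes q :: nat
  assumes "q \<ge> 2"
  shows "(\<exists>(C :: ('a::{finite,field}, 'd::finite, node) vlnc) A1.
            is_vlnc_solution (charq_edges q) (charq_sources q) (charq_terminals q)
              (charq_demands q) C
          \<and> s_coeff_on_e1 q C A1 \<and> A1 \<noteq> 0)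
         \<longleftrightarrow> CHAR('a) dvd q"
proof
  assume "\<exists>(C :: ('a::{finite,field}, 'd::finite, node) vlnc) A1.
            is_vlnc_solution (charq_edges q) (charq_sources q) (charq_terminals q)
              (charq_demands q) C
          \<and> s_coeff_on_e1 q C A1 \<and> A1 \<noteq> 0"
  then obtain C :: "('a, 'd, node) vlnc" and A1 where
    s: "is_vlnc_solution (charq_edges q) (charq_sources q) (charq_terminals q) (charq_demands q) C"
    and sc: "s_coeff_on_e1 q C A1" and nz: "A1 \<noteq> 0" by blast
  show "CHAR('a) dvd q"
  proof (rule ccontr)
    assume "\<not> CHAR('a) dvd q"
    then have "of_nat q \<noteq> (0::'a)" by (simp add: of_nat_eq_0_iff_char_dvd)
    then have "A1 = 0" using only_if[OF assms s sc] by blast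
    then show False using nz by simp
  qed
next
  assume "CHAR('a) dvd q"
  then have ch: "of_nat q = (0::'a)" by (simp add: of_nat_eq_0_iff_char_dvd)
  show "\<exists>(C :: ('a::{finite,field}, 'd::finite, node) vlnc) A1.
            is_vlnc_solution (charq_edges q) (charq_sources q) (charq_terminals q)
              (charq_demands q) C
          \<and> s_coeff_on_e1 q C A1 \<and> A1 \<noteq> 0"
    using if_dir[OF assms ch] if_dir2 mat1_nz by blast
qed

end
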